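(* Suppose $\kappa<\lambda$ are cardinals, with $\lambda$ regular, and suppose there is a function $d:[\lambda]^2\to\kappa$ satisfying: (1) for all $\alpha<\beta<\gamma<\lambda$, $d(\alpha,\gamma)\leq\max(d(\alpha,\beta),d(\beta,\gamma))$; (2) for all $\alpha<\beta<\gamma<\lambda$, $d(\alpha,\beta)\leq\max(d(\alpha,\gamma),d(\beta,\gamma))$; (3) for every unbounded $I\subseteq\lambda$, $d``[I]^2$ is unbounded in $\kappa$. Then there is a $\lambda$-system $S=\langle\lambda\times\kappa,\{R\}\rangle$ (with a single relation $R$) with no cofinal branch.
   Context: $d(\alpha,\beta)$ denotes $d(\{\alpha,\beta\})$. Let $\lambda$ be an infinite regular cardinal. A binary relation $R$ is tree-like if whenever $a<_Rc$ and $b<_Rc$, then $a,b$ are $R$-comparable ($a=b$, $a<_Rb$ or $b<_Ra$). A $\lambda$-system is $S=\langle\bigcup_{\alpha\in I}\{\alpha\}\times\kappa_\alpha,\mathcal{R}\rangle$ where: $I\subseteq\lambda$ is unbounded, each $\kappa_\alpha$ is a cardinal with $0<\kappa_\alpha<\lambda$ (level $S_\alpha=\{\alpha\}\times\kappa_\alpha$); $\mathcal{R}$ is a set of binary, transitive, tree-like relations on the underlying set with $0<|\mathcal{R}|<\lambda$; if $(\alpha_0,\beta_0)<_R(\alpha_1,\beta_1)$ for $R\in\mathcal{R}$ then $\alpha_0<\alpha_1$; and for all $\alpha_0<\alpha_1$ in $I$ there are $\beta_0<\kappa_{\alpha_0},\beta_1<\kappa_{\alpha_1}$, $R\in\mathcal{R}$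 with $(\alpha_0,\beta_0)<_R(\alpha_1,\beta_1)$. When all $\kappa_\alpha$ equal $\kappa$ we write $\langle I\times\kappa,\mathcal{R}\rangle$. A branch through $R\in\mathcal{R}$ is a set of pairwise $R$-comparable elements; it is cofinal if it meets $S_\alpha$ for unboundedly many $\alpha\in I$; $S$ has a cofinal branch if some $R\in\mathcal{R}$ has a cofinal branch. *)

theory Defs
  imports Main
begin

text \<open>Cardinals are represented as cardinal orders (well-order relations) in the sense of
  the library theory BNF_Cardinal_Order_Relation.  For a well-order L, the strict order is
  (a,b) in L with a not equal b; "unbounded in L" is the library notion cofinal.\<close>

definition lt_in :: "'a rel \<Rightarrow> 'a \<Rightarrow> 'a \<Rightarrow> bool" where
  "lt_in L a b \<longleftrightarrow> (a, b) \<in> L \<and> a \<noteq> b"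

definition rmax :: "'b rel \<Rightarrow> 'b \<Rightarrow> 'b \<Rightarrow> 'b" where
  "rmax K x y = (if (x, y) \<in> K then y else x)"

definition tree_like :: "'c rel \<Rightarrow> bool" where
  "tree_like R \<longleftrightarrow> (\<forall>a b c. (a, c) \<in> R \<and> (b, c) \<in> R \<longrightarrow> a = b \<or> (a, b) \<in> R \<or> (b, a) \<in> R)"

text \<open>The lambda-system with constant level width kappa:
  S = <I x kappa, Rs>, where lambda is represented by the cardinal order L and
  kappa by the cardinal order K (levels are {alpha} x Field K).\<close>
definition lambda_system ::
  "'a rel \<Rightarrow> 'a set \<Rightarrow> 'b rel \<Rightarrow> (('a \<times> 'b) rel) set \<Rightarrow> bool" where
  "lambda_system L I K Rs \<longleftrightarrow>
     I \<subseteq> Field L \<and> cofinal I L \<and>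
     Card_order K \<and> Field K \<noteq> {} \<and> (K, L) \<in> ordLess \<and>
     Rs \<noteq> {} \<and> (card_of Rs, L) \<in> ordLess \<and>
     (\<forall>R\<in>Rs. R \<subseteq> (I \<times> Field K) \<times> (I \<times> Field K) \<and> trans R \<and> tree_like R \<and>
        (\<forall>x y. (x, y) \<in> R \<longrightarrow> lt_in L (fst x) (fst y))) \<and>
     (\<forall>\<alpha>\<in>I. \<forall>\<beta>\<in>I. lt_in L \<alpha> \<beta> \<longrightarrow>
        (\<exists>\<beta>0\<in>Field K. \<exists>\<beta>1\<in>Field K. \<exists>R\<in>Rs. ((\<alpha>, \<beta>0), (\<beta>, \<beta>1)) \<in> R))"

definition is_branch :: "('c) rel \<Rightarrow> 'c set \<Rightarrow> bool" where
  "is_branch R B \<longleftrightarrow> (\<forall>x\<in>B. \<forall>y\<in>B. x = y \<or> (x, y) \<in> R \<or> (y, x) \<in> R)"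

definition cofinal_branch ::
  "'a rel \<Rightarrow> 'a set \<Rightarrow> 'b rel \<Rightarrow> ('a \<times> 'b) rel \<Rightarrow> ('a \<times> 'b) set \<Rightarrow> bool" where
  "cofinal_branch L I K R B \<longleftrightarrow> B \<subseteq> I \<times> Field K \<and> is_branch R B \<and>
     cofinal (fst ` B) L"

definition has_cofinal_branch ::
  "'a rel \<Rightarrow> 'a set \<Rightarrow> 'b rel \<Rightarrow> (('a \<times> 'b) rel) set \<Rightarrow> bool" where
  "has_cofinal_branch L I K Rs \<longleftrightarrow> (\<exists>R\<in>Rs. \<exists>B. cofinal_branch L I K R B)"

end

theory Submission
  imports Defs
begin

theorem mainTheorem8:
  fixes L :: "'a rel" and K :: "'b rel" and d :: "'a set \<Rightarrow> 'b"
  assumes L_card: "Card_order L" and L_inf: "infinite (Field L)" and L_reg: "regularCard L"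
    and K_card: "Card_order K" and K_less: "(K, L) \<in> ordLess"
    and d_range: "\<forall>\<alpha>\<in>Field L. \<forall>\<beta>\<in>Field L. \<alpha> \<noteq> \<beta> \<longrightarrow> d {\<alpha>, \<beta>} \<in> Field K"
    and d1: "\<forall>\<alpha> \<beta> \<gamma>. lt_in L \<alpha> \<beta> \<and> lt_in L \<beta> \<gamma> \<longrightarrow>
               (d {\<alpha>, \<gamma>}, rmax K (d {\<alpha>, \<beta>}) (d {\<beta>, \<gamma>})) \<in> K"
    and d2: "\<forall>\<alpha> \<beta> \<gamma>. lt_in L \<alpha> \<beta> \<and> lt_in L \<beta> \<gamma> \<longrightarrow>
               (d {\<alpha>, \<beta>}, rmax K (d {\<alpha>, \<gamma>}) (d {\<beta>, \<gamma>})) \<in> K"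
    and d3: "\<forall>I. I \<subseteq> Field L \<and> cofinal I L \<longrightarrow>
               cofinal {d {\<alpha>, \<beta>} | \<alpha> \<beta>. \<alpha> \<in> I \<and> \<beta> \<in> I \<and> \<alpha> \<noteq> \<beta>} K"
  shows "\<exists>R. lambda_system L (Field L) K {R} \<and> \<not> has_cofinal_branch L (Field L) K {R}"
proof -
  have WL: "Well_order L" using L_card by (simp add: card_order_on_def)
  have WK: "Well_order K" using K_card by (simp add: card_order_on_def)
  have transL: "trans L" and antiL: "antisym L" and totL: "Total L"
    using WL by (auto simp: order_on_defs)
  have transK: "trans K" and antiK: "antisym K" and reflK: "Refl K"
    using WK by (auto simp: order_on_defs)
  have cofL: "cofinal (Field L) L"
    unfolding cofinal_def using infinite_Card_order_limit[OF L_card L_inf] by blast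
  have ltF: "\<alpha> \<in> Field L \<and> \<beta> \<in> Field L" if "lt_in L \<alpha> \<beta>" for \<alpha> \<beta>
    using that by (auto simp: lt_in_def Field_def)
  have lt_trans: "lt_in L \<alpha> \<gamma>" if "lt_in L \<alpha> \<beta>" "lt_in L \<beta> \<gamma>" for \<alpha> \<beta> \<gamma>
    using that transL antiL unfolding lt_in_def trans_def antisym_def by blast
  have rmaxle: "(rmax K x y, i) \<in> K" if "(x,i) \<in> K" "(y,i) \<in> K" for x y i
    using that by (simp add: rmax_def)
  have Kne: "Field K \<noteq> {}"
  proof -
    obtain a where a: "a \<in> Field L" using L_inf by (metis finite.emptyI ex_in_conv)
    obtain b where "b \<in> Field L" "a \<noteq> b" "(a,b) \<in> L"
      using infinite_Card_order_limit[OF L_card L_inf a] by blast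
    thus ?thesis using d_range a by blast
  qed
  define R where "R = {((\<alpha>,i),(\<beta>,j)). lt_in L \<alpha> \<beta> \<and> i = j \<and> i \<in> Field K \<and> (d {\<alpha>,\<beta>}, i) \<in> K}"
  have Rtrans: "trans R"
    unfolding trans_def
  proof (intro allI impI)
    fix x y z assume "(x,y) \<in> R" "(y,z) \<in> R"
    then obtain \<alpha> \<beta> \<gamma> i where xyz: "x = (\<alpha>,i)" "y = (\<beta>,i)" "z = (\<gamma>,i)" "lt_in L \<alpha> \<beta>" "lt_in L \<beta> \<gamma>"
      "i \<in> Field K" "(d {\<alpha>,\<beta>}, i) \<in> K" "(d {\<beta>,\<gamma>}, i) \<in> K"
      unfolding R_def by auto
    have "(d {\<alpha>,\<gamma>}, rmax K (d {\<alpha>, \<beta>}) (d {\<beta>, \<gamma>})) \<in> K" using d1 xyz by blast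
    moreover have "(rmax K (d {\<alpha>, \<beta>}) (d {\<beta>, \<gamma>}), i) \<in> K" using rmaxle xyz by blast
    ultimately have "(d {\<alpha>,\<gamma>}, i) \<in> K" using transK unfolding trans_def by blast
    thus "(x,z) \<in> R" using xyz lt_trans unfolding R_def by auto
  qed
  have Rtree: "tree_like R"
    unfolding tree_like_def
  proof (intro allI impI)
    fix a b c assume "(a,c) \<in> R \<and> (b,c) \<in> R"
    then obtain \<alpha> \<beta> \<gamma> i where abc: "a = (\<alpha>,i)" "b = (\<beta>,i)" "c = (\<gamma>,i)" "lt_in L \<alpha> \<gamma>" "lt_in L \<beta> \<gamma>"
      "i \<in> Field K" "(d {\<alpha>,\<gamma>}, i) \<in> K" "(d {\<beta>,\<gamma>}, i) \<in> K"
      unfolding R_def by auto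
    show "a = b \<or> (a, b) \<in> R \<or> (b, a) \<in> R"
    proof (cases "\<alpha> = \<beta>")
      case True thus ?thesis using abc by simp
    next
      case False
      have "\<alpha> \<in> Field L" "\<beta> \<in> Field L" using ltF abc by auto
      hence "lt_in L \<alpha> \<beta> \<or> lt_in L \<beta> \<alpha>" using totL False
        unfolding lt_in_def total_on_def by blast
      thus ?thesis
      proof
        assume h: "lt_in L \<alpha> \<beta>"
        have "(d {\<alpha>,\<beta>}, rmax K (d {\<alpha>, \<gamma>}) (d {\<beta>, \<gamma>})) \<in> K" using d2 h abc by blast
        moreover have "(rmax K (d {\<alpha>, \<gamma>}) (d {\<beta>, \<gamma>}), i) \<in> K" using rmaxle abc by blast
        ultimately have "(d {\<alpha>,\<beta>}, i) \<in> K" using transK unfolding trans_def by blast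
        thus ?thesis using abc h unfolding R_def by auto
      next
        assume h: "lt_in L \<beta> \<alpha>"
        have "(d {\<beta>,\<alpha>}, rmax K (d {\<beta>, \<gamma>}) (d {\<alpha>, \<gamma>})) \<in> K" using d2 h abc by blast
        moreover have "(rmax K (d {\<beta>, \<gamma>}) (d {\<alpha>, \<gamma>}), i) \<in> K" using rmaxle abc by blast
        ultimately have "(d {\<beta>,\<alpha>}, i) \<in> K" using transK unfolding trans_def by blast
        thus ?thesis using abc h unfolding R_def by auto
      qed
    qed
  qed
  have card1: "(card_of {R}, L) \<in> ordLess"
  proof -
    have "(card_of {R}, card_of (Field L)) \<in> ordLess"
      using finite_ordLess_infinite[of "card_of {R}" "card_of (Field L)"] L_inf by (simp add: card_of_well_order_on Field_card_of)
    thus ?thesis using ordLess_ordIso_trans card_of_Field_ordIso[OF L_card] by blast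
  qed
  have sys: "lambda_system L (Field L) K {R}"
    unfolding lambda_system_def
  proof (intro conjI)
    show "\<forall>Ra\<in>{R}. Ra \<subseteq> (Field L \<times> Field K) \<times> Field L \<times> Field K \<and> trans Ra \<and> tree_like Ra \<and>
        (\<forall>x y. (x, y) \<in> Ra \<longrightarrow> lt_in L (fst x) (fst y))"
    proof -
      have "R \<subseteq> (Field L \<times> Field K) \<times> Field L \<times> Field K"
      proof
        fix p assume "p \<in> R"
        then obtain \<alpha> i \<beta> where p: "p = ((\<alpha>,i),(\<beta>,i))" "lt_in L \<alpha> \<beta>" "i \<in> Field K"
          unfolding R_def by blast
        thus "p \<in> (Field L \<times> Field K) \<times> Field L \<times> Field K" using ltF[OF p(2)] by simp
      qed
      moreover have "\<forall>x y. (x, y) \<in> R \<longrightarrow> lt_in L (fst x) (fst y)" unfolding R_def by auto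
      ultimately show ?thesis using Rtrans Rtree by blast
    qed
    show "\<forall>\<alpha>\<in>Field L. \<forall>\<beta>\<in>Field L. lt_in L \<alpha> \<beta> \<longrightarrow>
        (\<exists>\<beta>0\<in>Field K. \<exists>\<beta>1\<in>Field K. \<exists>Ra\<in>{R}. ((\<alpha>, \<beta>0), \<beta>, \<beta>1) \<in> Ra)"
    proof (intro ballI impI)
      fix \<alpha> \<beta> assume "\<alpha> \<in> Field L" "\<beta> \<in> Field L" "lt_in L \<alpha> \<beta>"
      hence "d {\<alpha>,\<beta>} \<in> Field K" using d_range by (auto simp: lt_in_def)
      moreover hence "(d {\<alpha>,\<beta>}, d {\<alpha>,\<beta>}) \<in> K" using reflK by (simp add: refl_on_def)
      ultimately have "((\<alpha>, d {\<alpha>,\<beta>}), (\<beta>, d {\<alpha>,\<beta>})) \<in> R"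
        using \<open>lt_in L \<alpha> \<beta>\<close> unfolding R_def by simp
      thus "\<exists>\<beta>0\<in>Field K. \<exists>\<beta>1\<in>Field K. \<exists>Ra\<in>{R}. ((\<alpha>, \<beta>0), \<beta>, \<beta>1) \<in> Ra"
        using \<open>d {\<alpha>,\<beta>} \<in> Field K\<close> by blast
    qed
  qed (simp only: subset_refl cofL K_card Kne K_less card1 insert_not_empty not_False_eq_True)+
  have Rsnd: "snd p = snd q" if "(p,q) \<in> R" for p q
    using that unfolding R_def by (cases p, cases q) simp
  have Rlt: "(d {fst p, fst q}, snd q) \<in> K" if "(p,q) \<in> R" for p q
    using that unfolding R_def by (cases p, cases q) simp
  have nob: "\<not> has_cofinal_branch L (Field L) K {R}"
  proof
    assume "has_cofinal_branch L (Field L) K {R}"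
    then obtain B where B: "B \<subseteq> Field L \<times> Field K" "is_branch R B" "cofinal (fst ` B) L"
      unfolding has_cofinal_branch_def cofinal_branch_def by auto
    obtain a where a: "a \<in> Field L" using L_inf by (metis finite.emptyI ex_in_conv)
    then obtain x0 where x0: "x0 \<in> B" using B(3) unfolding cofinal_def by auto
    define i where "i = snd x0"
    have iK: "i \<in> Field K" using x0 B(1) i_def by auto
    have sndB: "snd x = i" if "x \<in> B" for x
    proof -
      have "x = x0 \<or> (x, x0) \<in> R \<or> (x0, x) \<in> R" using B(2) that x0 unfolding is_branch_def by blast
      thus ?thesis using Rsnd i_def by metis
    qed
    have "fst ` B \<subseteq> Field L" using B(1) by auto
    hence "cofinal {d {\<alpha>, \<beta>} | \<alpha> \<beta>. \<alpha> \<in> fst ` B \<and> \<beta> \<in> fst ` B \<and> \<alpha> \<noteq> \<beta>} K"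
      using d3 B(3) by blast
    then have cS: "\<forall>a\<in>Field K. \<exists>b\<in>{d {\<alpha>, \<beta>} | \<alpha> \<beta>. \<alpha> \<in> fst ` B \<and> \<beta> \<in> fst ` B \<and> \<alpha> \<noteq> \<beta>}. a \<noteq> b \<and> (a,b) \<in> K"
      unfolding cofinal_def .
    obtain b where b: "b \<in> {d {\<alpha>, \<beta>} | \<alpha> \<beta>. \<alpha> \<in> fst ` B \<and> \<beta> \<in> fst ` B \<and> \<alpha> \<noteq> \<beta>}" "i \<noteq> b" "(i,b) \<in> K"
      using bspec[OF cS iK] by (elim bexE conjE) 
    from b(1) obtain \<alpha> \<beta> where ab: "b = d {\<alpha>, \<beta>}" "\<alpha> \<in> fst ` B" "\<beta> \<in> fst ` B" "\<alpha> \<noteq> \<beta>"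
      by (auto simp only: mem_Collect_eq)
    from ab(2) obtain x where x: "x \<in> B" "\<alpha> = fst x" by (rule imageE) simp
    from ab(3) obtain y where y: "y \<in> B" "\<beta> = fst y" by (rule imageE) simp
    have xy: "x \<in> B" "y \<in> B" "fst x \<noteq> fst y" "b = d {fst x, fst y}" using x y ab by simp_all
    have "(x,y) \<in> R \<or> (y,x) \<in> R" using B(2) xy unfolding is_branch_def by auto
    hence "(b, i) \<in> K"
    proof
      assume "(x,y) \<in> R" thus ?thesis using xy sndB Rlt by metis
    next
      assume "(y,x) \<in> R" thus ?thesis using xy sndB Rlt insert_commute by metis
    qed
    thus False using b antiK unfolding antisym_def by blast
  qed
  show ?thesis using sys nob by blast
qed

end
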